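(* Let $N\ge 1$ be an integer, let $\delta>0$ be a constant, and let $m_0,m_1,\dots,m_{N-1}$ be i.i.d. real random variables whose distribution is symmetric about $0$ (i.e. their probability density or mass function $g$ is even). Let $\Phi(x)=\mathbb{E}\{e^{j2\pi m_0 x}\}$, which is real-valued by the symmetry of $g$. For real $q,p$ define the random beampattern $$\beta(q,p)=\frac{1}{N}e^{j2\pi\frac{p}{\delta}}\sum_{n=0}^{N-1}e^{j2\pi\left(n-\frac{N-1}{2}\right)q}\,e^{j2\pi m_n p},$$ and let $\beta_1(q,p)=\Re\{\beta(q,p)\}$, $\beta_2(q,p)=\Im\{\beta(q,p)\}$, $\boldsymbol{\beta}(q,p)=[\beta_1(q,p),\beta_2(q,p)]^T$. Let $S_a^N(x)=\frac{\sin(N\pi x)}{\sin(\pi x)}$ (extended by continuity where $\sin(\pi x)=0$), and $\alpha=2\pi p/\delta$. Then the random vector $\boldsymbol{\beta}(q,p)$ is asymptotically (as $N\to\infty$) jointly Gaussian distributed, and its mean and covariance matrix are $$\mathbb{E}\{\boldsymbol{\beta}(q,p)\}=\frac{1}{N}S_a^N(q)\Phi(p)\begin{bmatrix}\cos\alpha\\ \sin\alpha\end{bmatrix},$$ $$\mathbb{E}\Big\{[\boldsymbol{\beta}-\mathbb{E}\boldsymbol{\beta}][\boldsymbol{\beta}-\mathbb{E}\boldsymbol{\beta}]^T\Big\}=\begin{bmatrix}\sigma_r^2\cos^2\alpha+\sigma_i^2\sin^2\alpha&(\sigma_r^2-\sigma_i^2)\sin\alpha\cos\alpha\\(\sigma_r^2-\sigma_i^2)\sin\alpha\cos\alpha&\sigma_r^2\sin^2\alpha+\sigma_i^2\cos^2\alpha\end{bmatrix},$$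 where $$\sigma_r^2=\frac{1}{2N}\left[1-\Phi^2(p)-\frac{S_a^N(2q)}{N}\left(\Phi^2(p)-\Phi(2p)\right)\right],\qquad \sigma_i^2=\frac{1}{2N}\left[1-\Phi^2(p)+\frac{S_a^N(2q)}{N}\left(\Phi^2(p)-\Phi(2p)\right)\right].$$
   Context: This models the beampattern of a Random Frequency Diverse Array: a uniform linear array of $N$ elements where element $n$ uses carrier frequency $f_c+m_n\Delta f$ with $m_n$ random; $q$ is a scaled difference of direction sines, $p$ a scaled range difference, and $\delta=\Delta f/f_c$. The expectation is over the random vector $(m_0,\dots,m_{N-1})$. *)

theory Defs
  imports "HOL-Probability.Probability"
begin

text \<open>Dirichlet kernel S_a^N(x) = sin(N pi x)/sin(pi x), extended by continuity
  (its limit value N cos(N pi x)/cos(pi x)) where sin(pi x) = 0.\<close>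
definition SaN :: "nat \<Rightarrow> real \<Rightarrow> real" where
  "SaN N x = (if sin (pi * x) = 0 then real N * cos (real N * pi * x) / cos (pi * x)
              else sin (real N * pi * x) / sin (pi * x))"

definition beam :: "nat \<Rightarrow> real \<Rightarrow> (nat \<Rightarrow> 'a \<Rightarrow> real) \<Rightarrow> real \<Rightarrow> real \<Rightarrow> 'a \<Rightarrow> complex" where
  "beam N \<delta> m q p \<omega> =
     (1 / of_nat N) * exp (\<i> * complex_of_real (2 * pi * p / \<delta>)) *
     (\<Sum>n<N. exp (\<i> * complex_of_real (2 * pi * (real n - (real N - 1) / 2) * q)) *
             exp (\<i> * complex_of_real (2 * pi * m n \<omega> * p)))"

text \<open>Phi(x) = E exp(j 2 pi m_0 x) (complex-valued a priori).\<close>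
definition Phi :: "'a measure \<Rightarrow> (nat \<Rightarrow> 'a \<Rightarrow> real) \<Rightarrow> real \<Rightarrow> complex" where
  "Phi P m x = integral\<^sup>L P (\<lambda>\<omega>. exp (\<i> * complex_of_real (2 * pi * m 0 \<omega> * x)))"

definition sig_r2 :: "(real \<Rightarrow> real) \<Rightarrow> nat \<Rightarrow> real \<Rightarrow> real \<Rightarrow> real" where
  "sig_r2 \<Phi> N q p = 1 / (2 * real N) *
     (1 - (\<Phi> p)\<^sup>2 - SaN N (2 * q) / real N * ((\<Phi> p)\<^sup>2 - \<Phi> (2 * p)))"

definition sig_i2 :: "(real \<Rightarrow> real) \<Rightarrow> nat \<Rightarrow> real \<Rightarrow> real \<Rightarrow> real" where
  "sig_i2 \<Phi> N q p = 1 / (2 * real N) *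
     (1 - (\<Phi> p)\<^sup>2 + SaN N (2 * q) / real N * ((\<Phi> p)\<^sup>2 - \<Phi> (2 * p)))"

end

theory Submission
  imports Defs
begin


lemma sum_shift2:
  fixes g :: "real \<Rightarrow> 'b::comm_monoid_add"
  shows "(\<Sum>n<N+2. g (2 * real n - real (N+2) + 1)) =
     g (-(real N + 1)) + (\<Sum>n<N. g (2 * real n - real N + 1)) + g (real N + 1)"
proof -
  have "(\<Sum>n<N+2. g (2 * real n - real (N+2) + 1)) = (\<Sum>n<Suc (Suc N). g (2 * real n - real (N+2) + 1))"
    by simp
  also have "\<dots> = g (-(real N + 1)) + (\<Sum>n<Suc N. g (2 * real (Suc n) - real (N+2) + 1))"
    by (subst sum.lessThan_Suc_shift) (simp add: algebra_simps)
  also have "(\<Sum>n<Suc N. g (2 * real (Suc n) - real (N+2) + 1)) = (\<Sum>n<N. g (2 * real n - real N + 1)) + g (real N + 1)"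
    by (simp add: algebra_simps)
  finally show ?thesis by (simp add: add.assoc)
qed

lemma iexp_pm: "exp (\<i> * complex_of_real (-a)) + exp (\<i> * complex_of_real a) = complex_of_real (2 * cos a)"
  by (simp add: complex_eq_iff Re_exp Im_exp)

lemma dir_aux:
  "(\<Sum>n<N. exp (\<i> * complex_of_real ((2 * real n - real N + 1) * y))) * sin y = sin (real N * y)
   \<and> (sin y = 0 \<longrightarrow> (\<Sum>n<N. exp (\<i> * complex_of_real ((2 * real n - real N + 1) * y))) = real N * cos ((real N - 1) * y))"
proof (induction N rule: nat_induct2)
  case 0
  then show ?case by simp
next
  case 1
  then show ?case by simp
next
  case (step N)
  let ?g = "\<lambda>t. exp (\<i> * complex_of_real (t * y))"
  have rec: "(\<Sum>n<N+2. ?g (2 * real n - real (N+2) + 1)) = (\<Sum>n<N. ?g (2 * real n - real N + 1)) + complex_of_real (2 * cos ((real N + 1) * y))"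
    using sum_shift2[of ?g N] iexp_pm[of "(real N + 1) * y"] by (simp add: algebra_simps)
  have t1: "sin (real N * y) + 2 * cos ((real N + 1) * y) * sin y = sin ((real N + 2) * y)"
  proof -
    have "sin ((real N + 2) * y) = sin ((real N + 1) * y + y)" by (simp add: algebra_simps)
    moreover have "sin (real N * y) = sin ((real N + 1) * y - y)" by (simp add: algebra_simps)
    ultimately show ?thesis by (simp add: sin_add sin_diff)
  qed
  have t2: "sin y = 0 \<Longrightarrow> cos ((real N + 1) * y) = cos ((real N - 1) * y)"
  proof -
    assume s: "sin y = 0"
    have "cos ((real N + 1) * y) = cos ((real N - 1) * y + 2 * y)" by (simp add: algebra_simps)
    also have "\<dots> = cos ((real N - 1) * y)" using s sin_cos_squared_add[of y]
      by (simp add: cos_add sin_double cos_double)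
    finally show ?thesis .
  qed
  have t3: "sin y = 0 \<Longrightarrow> cos ((real N + 1) * y) = cos ((real (N+2) - 1) * y)"
    by (simp add: algebra_simps)
  show ?case
  proof
    show "(\<Sum>n<N+2. ?g (2 * real n - real (N+2) + 1)) * sin y = sin (real (N+2) * y)"
      unfolding rec using step t1 by (simp add: algebra_simps flip: of_real_mult of_real_add)
  next
    show "sin y = 0 \<longrightarrow> (\<Sum>n<N+2. ?g (2 * real n - real (N+2) + 1)) = real (N+2) * cos ((real (N+2) - 1) * y)"
    proof
      assume s: "sin y = 0"
      show "(\<Sum>n<N+2. ?g (2 * real n - real (N+2) + 1)) = real (N+2) * cos ((real (N+2) - 1) * y)"
        unfolding rec using step s t2[OF s] t3[OF s] by (simp add: algebra_simps)
    qed
  qed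
qed

lemma dirichlet:
  "(\<Sum>n<N. exp (\<i> * complex_of_real (2 * pi * (real n - (real N - 1) / 2) * x))) = complex_of_real (SaN N x)"
proof -
  have eq: "(\<Sum>n<N. exp (\<i> * complex_of_real (2 * pi * (real n - (real N - 1) / 2) * x)))
     = (\<Sum>n<N. exp (\<i> * complex_of_real ((2 * real n - real N + 1) * (pi * x))))"
    by (intro sum.cong refl arg_cong[where f="\<lambda>t. exp (\<i> * complex_of_real t)"]) (simp add: field_simps)
  show ?thesis
  proof (cases "sin (pi * x) = 0")
    case True
    have c: "cos (pi * x) \<noteq> 0" using True sin_cos_squared_add[of "pi * x"] by auto
    have "cos (real N * pi * x) = cos ((real N - 1) * (pi * x) + pi * x)" by (simp add: algebra_simps)
    also have "\<dots> = cos ((real N - 1) * (pi * x)) * cos (pi * x)" using True by (simp add: cos_add)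
    finally have "real N * cos (real N * pi * x) / cos (pi * x) = real N * cos ((real N - 1) * (pi * x))"
      using c by simp
    then show ?thesis using True dir_aux[of N "pi * x"] unfolding eq SaN_def by simp
  next
    case False
    have "(\<Sum>n<N. exp (\<i> * complex_of_real ((2 * real n - real N + 1) * (pi * x)))) = sin (real N * (pi * x)) / sin (pi * x)"
      using False dir_aux[of N "pi * x"] by (simp add: field_simps)
    then show ?thesis using False unfolding eq SaN_def by (simp add: mult.assoc)
  qed
qed



locale rfda = prob_space P for P :: "'a measure" +
  fixes m :: "nat \<Rightarrow> 'a \<Rightarrow> real"
  assumes meas[measurable]: "\<And>n. m n \<in> borel_measurable P"
    and indep: "indep_vars (\<lambda>_. borel) m UNIV"
    and ident: "\<And>n. distr P borel (m n) = distr P borel (m 0)"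
    and symm: "distr P borel (\<lambda>\<omega>. - m 0 \<omega>) = distr P borel (m 0)"
begin

lemma intg:
  fixes f :: "'a \<Rightarrow> 'b::{banach,second_countable_topology}"
  assumes "f \<in> borel_measurable P" "\<And>\<omega>. norm (f \<omega>) \<le> B"
  shows "integrable P f"
  using assms by (intro integrable_const_bound[where B=B]) auto

lemma ident_int:
  fixes f :: "real \<Rightarrow> 'b::{banach,second_countable_topology}"
  assumes [measurable]: "f \<in> borel_measurable borel"
  shows "integral\<^sup>L P (\<lambda>\<omega>. f (m n \<omega>)) = integral\<^sup>L P (\<lambda>\<omega>. f (m 0 \<omega>))"
proof -
  have "integral\<^sup>L P (\<lambda>\<omega>. f (m n \<omega>)) = integral\<^sup>L (distr P borel (m n)) f"
    by (rule integral_distr[symmetric]) auto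
  also have "\<dots> = integral\<^sup>L (distr P borel (m 0)) f" by (simp add: ident[of n])
  also have "\<dots> = integral\<^sup>L P (\<lambda>\<omega>. f (m 0 \<omega>))"
    by (rule integral_distr) auto
  finally show ?thesis .
qed

lemma symm_int:
  fixes f :: "real \<Rightarrow> 'b::{banach,second_countable_topology}"
  assumes [measurable]: "f \<in> borel_measurable borel"
  shows "integral\<^sup>L P (\<lambda>\<omega>. f (- m 0 \<omega>)) = integral\<^sup>L P (\<lambda>\<omega>. f (m 0 \<omega>))"
proof -
  have "integral\<^sup>L P (\<lambda>\<omega>. f (- m 0 \<omega>)) = integral\<^sup>L (distr P borel (\<lambda>\<omega>. - m 0 \<omega>)) f"
    by (rule integral_distr[symmetric]) auto
  also have "\<dots> = integral\<^sup>L (distr P borel (m 0)) f" by (simp add: symm)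
  also have "\<dots> = integral\<^sup>L P (\<lambda>\<omega>. f (m 0 \<omega>))"
    by (rule integral_distr) auto
  finally show ?thesis .
qed

lemma prod_indep:
  fixes f :: "nat \<Rightarrow> real \<Rightarrow> 'b::{real_normed_field,banach,second_countable_topology}"
  assumes I: "finite I" and [measurable]: "\<And>i. f i \<in> borel_measurable borel"
    and bnd: "\<And>i x. norm (f i x) \<le> B"
  shows "integral\<^sup>L P (\<lambda>\<omega>. \<Prod>i\<in>I. f i (m i \<omega>)) = (\<Prod>i\<in>I. integral\<^sup>L P (\<lambda>\<omega>. f i (m i \<omega>)))"
proof -
  have "indep_vars (\<lambda>_. borel) m I" using indep_vars_subset[OF indep] by auto
  then have "indep_vars (\<lambda>_. borel) (\<lambda>i \<omega>. f i (m i \<omega>)) I"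
    by (rule indep_vars_compose2) auto
  then show ?thesis
    using I bnd by (intro indep_vars_lebesgue_integral) (auto intro!: intg[where B=B])
qed

lemma pair_indep:
  fixes f g :: "real \<Rightarrow> 'b::{real_normed_field,banach,second_countable_topology}"
  assumes nk: "n \<noteq> k" and [measurable]: "f \<in> borel_measurable borel" "g \<in> borel_measurable borel"
    and bnd: "\<And>x. norm (f x) \<le> B" "\<And>x. norm (g x) \<le> B"
  shows "integral\<^sup>L P (\<lambda>\<omega>. f (m n \<omega>) * g (m k \<omega>)) = integral\<^sup>L P (\<lambda>\<omega>. f (m n \<omega>)) * integral\<^sup>L P (\<lambda>\<omega>. g (m k \<omega>))"
proof -
  define h where "h i = (if i = n then f else g)" for i
  have "integral\<^sup>L P (\<lambda>\<omega>. \<Prod>i\<in>{n,k}. h i (m i \<omega>)) = (\<Prod>i\<in>{n,k}. integral\<^sup>L P (\<lambda>\<omega>. h i (m i \<omega>)))"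
    by (rule prod_indep[where B=B]) (auto simp: h_def bnd)
  then show ?thesis using nk by (simp add: h_def)
qed

definition phi :: "real \<Rightarrow> real" where "phi x = Re (Phi P m x)"

lemma Phi_cnj: "cnj (Phi P m x) = Phi P m x"
proof -
  have "cnj (Phi P m x) = integral\<^sup>L P (\<lambda>\<omega>. cnj (exp (\<i> * complex_of_real (2 * pi * m 0 \<omega> * x))))"
    unfolding Phi_def by (rule Bochner_Integration.integral_cnj[symmetric])
  also have "(\<lambda>\<omega>. cnj (exp (\<i> * complex_of_real (2 * pi * m 0 \<omega> * x)))) = (\<lambda>\<omega>. (\<lambda>y. exp (\<i> * complex_of_real (2 * pi * y * x))) (- m 0 \<omega>))"
    by (simp add: exp_cnj)
  also have "integral\<^sup>L P \<dots> = Phi P m x" unfolding Phi_def by (rule symm_int) measurable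
  finally show ?thesis .
qed

lemma Phi_real: "Im (Phi P m x) = 0"
  using Phi_cnj[of x] by (simp add: complex_eq_iff)

lemma Phi_eq: "Phi P m x = complex_of_real (phi x)"
  using Phi_real[of x] unfolding phi_def by (simp add: complex_eq_iff)

lemma EX: "integral\<^sup>L P (\<lambda>\<omega>. exp (\<i> * complex_of_real (2 * pi * m n \<omega> * x))) = complex_of_real (phi x)"
proof -
  have "integral\<^sup>L P (\<lambda>\<omega>. (\<lambda>y. exp (\<i> * complex_of_real (2 * pi * y * x))) (m n \<omega>)) = 
        integral\<^sup>L P (\<lambda>\<omega>. (\<lambda>y. exp (\<i> * complex_of_real (2 * pi * y * x))) (m 0 \<omega>))"
    by (rule ident_int) measurable
  then show ?thesis using Phi_eq[of x] unfolding Phi_def by simp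
qed

end


lemma dsum:
  fixes A B :: "nat \<Rightarrow> 'a \<Rightarrow> 'b::{real_normed_field, second_countable_topology, banach}"
  assumes int: "\<And>n k. integrable M (\<lambda>\<omega>. A n \<omega> * B k \<omega>)"
    and off: "\<And>n k. n < N \<Longrightarrow> k < N \<Longrightarrow> n \<noteq> k \<Longrightarrow> integral\<^sup>L M (\<lambda>\<omega>. A n \<omega> * B k \<omega>) = 0"
  shows "integral\<^sup>L M (\<lambda>\<omega>. (\<Sum>n<N. a n * A n \<omega>) * (\<Sum>k<N. b k * B k \<omega>))
         = (\<Sum>n<N. a n * b n * integral\<^sup>L M (\<lambda>\<omega>. A n \<omega> * B n \<omega>))"
proof -
  have "(\<lambda>\<omega>. (\<Sum>n<N. a n * A n \<omega>) * (\<Sum>k<N. b k * B k \<omega>)) =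
        (\<lambda>\<omega>. \<Sum>n<N. \<Sum>k<N. (a n * b k) * (A n \<omega> * B k \<omega>))"
    by (simp add: sum_product mult_ac)
  then have "integral\<^sup>L M (\<lambda>\<omega>. (\<Sum>n<N. a n * A n \<omega>) * (\<Sum>k<N. b k * B k \<omega>))
     = (\<Sum>n<N. \<Sum>k<N. (a n * b k) * integral\<^sup>L M (\<lambda>\<omega>. A n \<omega> * B k \<omega>))"
    using int by (simp add: integral_sum integrable_sum)
  also have "\<dots> = (\<Sum>n<N. a n * b n * integral\<^sup>L M (\<lambda>\<omega>. A n \<omega> * B n \<omega>))"
  proof (rule sum.cong[OF refl])
    fix n assume n: "n \<in> {..<N}"
    have "(\<Sum>k<N. (a n * b k) * integral\<^sup>L M (\<lambda>\<omega>. A n \<omega> * B k \<omega>)) =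
          (a n * b n) * integral\<^sup>L M (\<lambda>\<omega>. A n \<omega> * B n \<omega>) +
          (\<Sum>k\<in>{..<N}-{n}. (a n * b k) * integral\<^sup>L M (\<lambda>\<omega>. A n \<omega> * B k \<omega>))"
      using n by (simp add: sum.remove)
    also have "(\<Sum>k\<in>{..<N}-{n}. (a n * b k) * integral\<^sup>L M (\<lambda>\<omega>. A n \<omega> * B k \<omega>)) = 0"
      using n off by (intro sum.neutral) auto
    finally show "(\<Sum>k<N. (a n * b k) * integral\<^sup>L M (\<lambda>\<omega>. A n \<omega> * B k \<omega>)) =
          a n * b n * integral\<^sup>L M (\<lambda>\<omega>. A n \<omega> * B n \<omega>)" by simp
  qed
  finally show ?thesis .
qed

lemma cnj_meas[measurable]: "cnj \<in> borel_measurable borel"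
  by (rule borel_measurable_continuous_onI) (intro continuous_intros)

context rfda begin

lemma phi_bnd: "\<bar>phi x\<bar> \<le> 1"
proof -
  have "norm (Phi P m x) \<le> integral\<^sup>L P (\<lambda>\<omega>. norm (exp (\<i> * complex_of_real (2 * pi * m 0 \<omega> * x))))"
    unfolding Phi_def by (rule integral_norm_bound)
  also have "\<dots> = 1" by (simp add: prob_space)
  finally show ?thesis using Phi_eq[of x] by simp
qed

definition hY :: "real \<Rightarrow> real \<Rightarrow> complex" where
  "hY p y = exp (\<i> * complex_of_real (2 * pi * y * p)) - complex_of_real (phi p)"

lemma hY_meas[measurable]: "hY p \<in> borel_measurable borel"
  unfolding hY_def by measurable

lemma hY_bnd: "norm (hY p y) \<le> 2"
proof -
  have "norm (hY p y) \<le> norm (exp (\<i> * complex_of_real (2 * pi * y * p))) + norm (complex_of_real (phi p))"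
    unfolding hY_def by (rule norm_triangle_ineq4)
  also have "\<dots> \<le> 2" using phi_bnd[of p] by simp
  finally show ?thesis .
qed

lemma EY: "integral\<^sup>L P (\<lambda>\<omega>. hY p (m n \<omega>)) = 0"
proof -
  have "integral\<^sup>L P (\<lambda>\<omega>. hY p (m n \<omega>)) = integral\<^sup>L P (\<lambda>\<omega>. exp (\<i> * complex_of_real (2 * pi * m n \<omega> * p))) - integral\<^sup>L P (\<lambda>\<omega>. complex_of_real (phi p))"
    unfolding hY_def by (rule Bochner_Integration.integral_diff) (auto intro!: intg[where B=1])
  then show ?thesis using EX[of n p] by (simp add: prob_space)
qed

lemma EcY: "integral\<^sup>L P (\<lambda>\<omega>. cnj (hY p (m n \<omega>))) = 0"
  using EY by (simp add: Bochner_Integration.integral_cnj)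

lemma cross_cc: "n \<noteq> k \<Longrightarrow> integral\<^sup>L P (\<lambda>\<omega>. hY p (m n \<omega>) * cnj (hY p (m k \<omega>))) = 0"
proof -
  assume "n \<noteq> k"
  moreover have "(\<lambda>y. cnj (hY p y)) \<in> borel_measurable borel" by measurable
  ultimately show ?thesis using pair_indep[of n k "hY p" "\<lambda>y. cnj (hY p y)" 2] EY EcY hY_bnd by auto
qed

lemma cross: "n \<noteq> k \<Longrightarrow> integral\<^sup>L P (\<lambda>\<omega>. hY p (m n \<omega>) * hY p (m k \<omega>)) = 0"
  using pair_indep[of n k "hY p" "hY p" 2] EY hY_bnd by auto

lemma diag_cc: "integral\<^sup>L P (\<lambda>\<omega>. hY p (m n \<omega>) * cnj (hY p (m n \<omega>))) = complex_of_real (1 - (phi p)\<^sup>2)"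
proof -
  let ?X = "\<lambda>\<omega>. exp (\<i> * complex_of_real (2 * pi * m n \<omega> * p))"
  let ?c = "complex_of_real (phi p)"
  have pt: "hY p (m n \<omega>) * cnj (hY p (m n \<omega>)) = (1 + ?c * ?c) - (?c * ?X \<omega> + ?c * cnj (?X \<omega>))" for \<omega>
  proof -
    have "?X \<omega> * cnj (?X \<omega>) = 1" by (simp add: exp_cnj exp_minus_inverse)
    then show ?thesis unfolding hY_def by (simp add: algebra_simps)
  qed
  have i1: "integrable P ?X" by (rule intg[where B=1]) auto
  have i2: "integrable P (\<lambda>\<omega>. cnj (?X \<omega>))" by (rule intg[where B=1]) auto
  have "integral\<^sup>L P (\<lambda>\<omega>. hY p (m n \<omega>) * cnj (hY p (m n \<omega>))) = (1 + ?c * ?c) - (?c * ?c + ?c * ?c)"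
    unfolding pt using i1 i2 EX[of n p]
    by (simp add: prob_space Bochner_Integration.integral_cnj)
  then show ?thesis by (simp add: power2_eq_square)
qed

lemma diag: "integral\<^sup>L P (\<lambda>\<omega>. hY p (m n \<omega>) * hY p (m n \<omega>)) = complex_of_real (phi (2 * p) - (phi p)\<^sup>2)"
proof -
  let ?X = "\<lambda>\<omega>. exp (\<i> * complex_of_real (2 * pi * m n \<omega> * p))"
  let ?X2 = "\<lambda>\<omega>. exp (\<i> * complex_of_real (2 * pi * m n \<omega> * (2 * p)))"
  let ?c = "complex_of_real (phi p)"
  have pt: "hY p (m n \<omega>) * hY p (m n \<omega>) = (?X2 \<omega> + ?c * ?c) - 2 * ?c * ?X \<omega>" for \<omega>
  proof -
    have "?X \<omega> * ?X \<omega> = ?X2 \<omega>" by (simp add: exp_add[symmetric] algebra_simps)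
    then show ?thesis unfolding hY_def by (simp add: algebra_simps power2_eq_square)
  qed
  have i1: "integrable P ?X" by (rule intg[where B=1]) auto
  have i2: "integrable P ?X2" by (rule intg[where B=1]) auto
  have "integral\<^sup>L P (\<lambda>\<omega>. hY p (m n \<omega>) * hY p (m n \<omega>)) = (complex_of_real (phi (2*p)) + ?c * ?c) - 2 * ?c * ?c"
    unfolding pt using i1 i2 EX[of n p] EX[of n "2*p"]
    by (simp add: prob_space)
  then show ?thesis by (simp add: power2_eq_square)
qed

end


context rfda begin

definition ee :: "nat \<Rightarrow> real \<Rightarrow> nat \<Rightarrow> complex" where
  "ee N q n = exp (\<i> * complex_of_real (2 * pi * (real n - (real N - 1) / 2) * q))"

definition cc :: "nat \<Rightarrow> real \<Rightarrow> real \<Rightarrow> complex" where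
  "cc N \<delta> p = (1 / of_nat N) * exp (\<i> * complex_of_real (2 * pi * p / \<delta>))"

definition SS :: "nat \<Rightarrow> real \<Rightarrow> real \<Rightarrow> 'a \<Rightarrow> complex" where
  "SS N q p \<omega> = (\<Sum>n<N. ee N q n * hY p (m n \<omega>))"

lemma ee_norm[simp]: "norm (ee N q n) = 1"
  by (simp add: ee_def)

lemma ee_cnj: "ee N q n * cnj (ee N q n) = 1"
  by (simp add: ee_def exp_cnj exp_minus_inverse)

lemma ee_sq1: "ee N q n * ee N q n = exp (\<i> * complex_of_real (2 * pi * (real n - (real N - 1) / 2) * (2 * q)))"
proof -
  have r: "2 * pi * (real n - (real N - 1) / 2) * (2 * q) = 2 * pi * (real n - (real N - 1) / 2) * q + 2 * pi * (real n - (real N - 1) / 2) * q"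
    by (simp add: field_simps)
  show ?thesis unfolding ee_def r of_real_add distrib_left mult_exp_exp ..
qed

lemma ee_sq: "(\<Sum>n<N. ee N q n * ee N q n) = complex_of_real (SaN N (2 * q))"
  unfolding ee_sq1 by (rule dirichlet)

lemma cc_cnj: "cc N \<delta> p * cnj (cc N \<delta> p) = complex_of_real (1 / (real N)^2)"
proof -
  have "exp (\<i> * complex_of_real (2 * pi * p / \<delta>)) * cnj (exp (\<i> * complex_of_real (2 * pi * p / \<delta>))) = 1"
    by (simp add: exp_cnj exp_minus_inverse)
  then show ?thesis unfolding cc_def by (simp add: power2_eq_square field_simps)
qed

lemma SS_meas[measurable]: "SS N q p \<in> borel_measurable P"
  unfolding SS_def by measurable

lemma SS_bnd: "norm (SS N q p \<omega>) \<le> 2 * real N"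
proof -
  have "norm (SS N q p \<omega>) \<le> (\<Sum>n<N. norm (ee N q n * hY p (m n \<omega>)))"
    unfolding SS_def by (rule norm_sum)
  also have "\<dots> \<le> (\<Sum>n<N. 2)"
    by (rule sum_mono) (simp add: norm_mult hY_bnd)
  finally show ?thesis by simp
qed

lemma beam_meas[measurable]: "(\<lambda>\<omega>. beam N \<delta> m q p \<omega>) \<in> borel_measurable P"
  unfolding beam_def by measurable

lemma beam_eq: "beam N \<delta> m q p \<omega> = cc N \<delta> p * (\<Sum>n<N. ee N q n * exp (\<i> * complex_of_real (2 * pi * m n \<omega> * p)))"
  unfolding beam_def cc_def ee_def by simp

lemma Ebeam: "integral\<^sup>L P (beam N \<delta> m q p) = cc N \<delta> p * complex_of_real (SaN N q * phi p)"
proof -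
  have "integral\<^sup>L P (beam N \<delta> m q p) = cc N \<delta> p * integral\<^sup>L P (\<lambda>\<omega>. \<Sum>n<N. ee N q n * exp (\<i> * complex_of_real (2 * pi * m n \<omega> * p)))"
    unfolding beam_eq by (rule integral_mult_right_zero)
  also have "integral\<^sup>L P (\<lambda>\<omega>. \<Sum>n<N. ee N q n * exp (\<i> * complex_of_real (2 * pi * m n \<omega> * p)))
     = (\<Sum>n<N. integral\<^sup>L P (\<lambda>\<omega>. ee N q n * exp (\<i> * complex_of_real (2 * pi * m n \<omega> * p))))"
    by (rule Bochner_Integration.integral_sum) (auto intro!: intg[where B=1] simp: norm_mult simp del: of_real_mult)
  also have "\<dots> = (\<Sum>n<N. ee N q n * complex_of_real (phi p))"
    by (simp only: integral_mult_right_zero EX)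
  also have "\<dots> = (\<Sum>n<N. ee N q n) * complex_of_real (phi p)"
    by (simp add: sum_distrib_right)
  also have "(\<Sum>n<N. ee N q n) = complex_of_real (SaN N q)"
    unfolding ee_def by (rule dirichlet)
  finally show ?thesis by simp
qed

lemma zeq: "beam N \<delta> m q p \<omega> - integral\<^sup>L P (beam N \<delta> m q p) = cc N \<delta> p * SS N q p \<omega>"
proof -
  have "SS N q p \<omega> = (\<Sum>n<N. ee N q n * exp (\<i> * complex_of_real (2 * pi * m n \<omega> * p))) - (\<Sum>n<N. ee N q n) * complex_of_real (phi p)"
    unfolding SS_def hY_def by (simp only: right_diff_distrib sum_subtractf sum_distrib_right)
  moreover have "(\<Sum>n<N. ee N q n) = complex_of_real (SaN N q)"
    unfolding ee_def by (rule dirichlet)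
  ultimately show ?thesis unfolding beam_eq[of N \<delta> q p \<omega>] Ebeam by (simp add: right_diff_distrib)
qed

lemma hY_pbnd: "norm (hY p x * hY p y) \<le> 4" "norm (hY p x * cnj (hY p y)) \<le> 4"
proof -
  have "norm (hY p x) * norm (hY p y) \<le> 2 * 2"
    by (rule mult_mono) (auto simp: hY_bnd)
  then show "norm (hY p x * hY p y) \<le> 4" "norm (hY p x * cnj (hY p y)) \<le> 4"
    by (simp_all add: norm_mult)
qed

lemma K1: assumes N: "N \<ge> 1"
  shows "integral\<^sup>L P (\<lambda>\<omega>. (cc N \<delta> p * SS N q p \<omega>) * cnj (cc N \<delta> p * SS N q p \<omega>)) = complex_of_real ((1 - (phi p)\<^sup>2) / real N)"
proof -
  have "(\<lambda>\<omega>. (cc N \<delta> p * SS N q p \<omega>) * cnj (cc N \<delta> p * SS N q p \<omega>)) =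
        (\<lambda>\<omega>. (cc N \<delta> p * cnj (cc N \<delta> p)) * ((\<Sum>n<N. ee N q n * hY p (m n \<omega>)) * (\<Sum>k<N. cnj (ee N q k) * cnj (hY p (m k \<omega>)))))"
    unfolding SS_def by (simp add: mult_ac)
  then have "integral\<^sup>L P (\<lambda>\<omega>. (cc N \<delta> p * SS N q p \<omega>) * cnj (cc N \<delta> p * SS N q p \<omega>)) =
     (cc N \<delta> p * cnj (cc N \<delta> p)) * (\<Sum>n<N. ee N q n * cnj (ee N q n) * integral\<^sup>L P (\<lambda>\<omega>. hY p (m n \<omega>) * cnj (hY p (m n \<omega>))))"
    apply simp
    apply (rule disjI2)
    apply (rule dsum)
     apply (rule intg[where B=4])
      apply measurable
     apply (rule hY_pbnd)
    by (rule cross_cc)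
  also have "\<dots> = (cc N \<delta> p * cnj (cc N \<delta> p)) * (\<Sum>n<N. complex_of_real (1 - (phi p)\<^sup>2))"
    by (simp add: diag_cc ee_cnj)
  also have "\<dots> = complex_of_real ((1 - (phi p)\<^sup>2) / real N)"
    using N by (simp add: cc_cnj power2_eq_square field_simps)
  finally show ?thesis .
qed

lemma K2: 
  shows "integral\<^sup>L P (\<lambda>\<omega>. (cc N \<delta> p * SS N q p \<omega>) * (cc N \<delta> p * SS N q p \<omega>)) = 
     (cc N \<delta> p * cc N \<delta> p) * complex_of_real (SaN N (2 * q) * (phi (2 * p) - (phi p)\<^sup>2))"
proof -
  have "(\<lambda>\<omega>. (cc N \<delta> p * SS N q p \<omega>) * (cc N \<delta> p * SS N q p \<omega>)) =
        (\<lambda>\<omega>. (cc N \<delta> p * cc N \<delta> p) * ((\<Sum>n<N. ee N q n * hY p (m n \<omega>)) * (\<Sum>k<N. ee N q k * hY p (m k \<omega>))))"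
    unfolding SS_def by (simp add: mult_ac)
  then have "integral\<^sup>L P (\<lambda>\<omega>. (cc N \<delta> p * SS N q p \<omega>) * (cc N \<delta> p * SS N q p \<omega>)) =
     (cc N \<delta> p * cc N \<delta> p) * (\<Sum>n<N. ee N q n * ee N q n * integral\<^sup>L P (\<lambda>\<omega>. hY p (m n \<omega>) * hY p (m n \<omega>)))"
    apply simp
    apply (rule disjI2)
    apply (rule dsum)
     apply (rule intg[where B=4])
      apply measurable
     apply (rule hY_pbnd)
    by (rule cross)
  also have "\<dots> = (cc N \<delta> p * cc N \<delta> p) * ((\<Sum>n<N. ee N q n * ee N q n) * complex_of_real (phi (2 * p) - (phi p)\<^sup>2))"
    by (simp add: diag sum_distrib_right)
  also have "\<dots> = (cc N \<delta> p * cc N \<delta> p) * complex_of_real (SaN N (2 * q) * (phi (2 * p) - (phi p)\<^sup>2))"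
    by (simp add: ee_sq)
  finally show ?thesis .
qed

end


lemma lin1: "integrable M F \<Longrightarrow> integrable M G \<Longrightarrow> integral\<^sup>L M (\<lambda>\<omega>. (Re (F \<omega>) + Re (G \<omega>)) / 2) = (Re (integral\<^sup>L M F) + Re (integral\<^sup>L M G)) / 2"
  by simp
lemma lin2: "integrable M G \<Longrightarrow> integral\<^sup>L M (\<lambda>\<omega>. Im (G \<omega>) / 2) = Im (integral\<^sup>L M G) / 2"
  by simp
lemma lin3: "integrable M F \<Longrightarrow> integrable M G \<Longrightarrow> integral\<^sup>L M (\<lambda>\<omega>. (Re (F \<omega>) - Re (G \<omega>)) / 2) = (Re (integral\<^sup>L M F) - Re (integral\<^sup>L M G)) / 2"
  by simp

context rfda begin

lemma cc_Re: "Re (cc N \<delta> p) = cos (2 * pi * p / \<delta>) / real N"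
  unfolding cc_def by (simp add: Re_exp Im_exp)
lemma cc_Im: "Im (cc N \<delta> p) = sin (2 * pi * p / \<delta>) / real N"
  unfolding cc_def by (simp add: Re_exp Im_exp)
lemma cc2_Re: "Re (cc N \<delta> p * cc N \<delta> p * complex_of_real r) = r / (real N)\<^sup>2 * ((cos (2 * pi * p / \<delta>))\<^sup>2 - (sin (2 * pi * p / \<delta>))\<^sup>2)"
  unfolding cc_def by (simp add: Re_exp Im_exp power2_eq_square field_simps)
lemma cc2_Im: "Im (cc N \<delta> p * cc N \<delta> p * complex_of_real r) = r / (real N)\<^sup>2 * (2 * sin (2 * pi * p / \<delta>) * cos (2 * pi * p / \<delta>))"
  unfolding cc_def by (simp add: Re_exp Im_exp power2_eq_square field_simps)

lemma z_bnd: "norm (cc N \<delta> p * SS N q p \<omega>) \<le> norm (cc N \<delta> p) * (2 * real N)"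
  unfolding norm_mult by (rule mult_left_mono) (auto simp: SS_bnd)

lemma z_int1: "integrable P (\<lambda>\<omega>. (cc N \<delta> p * SS N q p \<omega>) * cnj (cc N \<delta> p * SS N q p \<omega>))"
proof (rule intg[where B="(norm (cc N \<delta> p) * (2 * real N))^2"])
  fix \<omega>
  show "norm ((cc N \<delta> p * SS N q p \<omega>) * cnj (cc N \<delta> p * SS N q p \<omega>)) \<le> (norm (cc N \<delta> p) * (2 * real N))^2"
    unfolding norm_mult complex_mod_cnj power2_eq_square by (intro mult_mono z_bnd) (auto simp: SS_bnd)
qed measurable

lemma z_int2: "integrable P (\<lambda>\<omega>. (cc N \<delta> p * SS N q p \<omega>) * (cc N \<delta> p * SS N q p \<omega>))"
proof (rule intg[where B="(norm (cc N \<delta> p) * (2 * real N))^2"])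
  fix \<omega>
  show "norm ((cc N \<delta> p * SS N q p \<omega>) * (cc N \<delta> p * SS N q p \<omega>)) \<le> (norm (cc N \<delta> p) * (2 * real N))^2"
    unfolding norm_mult power2_eq_square by (intro mult_mono z_bnd) (auto simp: SS_bnd)
qed measurable

lemma z_int: "integrable P (\<lambda>\<omega>. cc N \<delta> p * SS N q p \<omega>)"
  by (rule intg[where B="norm (cc N \<delta> p) * (2 * real N)"]) (auto simp: z_bnd)

lemma beam_int: "integrable P (beam N \<delta> m q p)"
proof -
  have "integrable P (\<lambda>\<omega>. cc N \<delta> p * SS N q p \<omega> + integral\<^sup>L P (beam N \<delta> m q p))"
    using z_int by auto
  moreover have "(\<lambda>\<omega>. cc N \<delta> p * SS N q p \<omega> + integral\<^sup>L P (beam N \<delta> m q p)) = beam N \<delta> m q p"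
    using zeq by (auto simp: fun_eq_iff algebra_simps)
  ultimately show ?thesis by simp
qed

lemma E1: "integral\<^sup>L P (\<lambda>\<omega>. Re (beam N \<delta> m q p \<omega>)) = 1 / real N * SaN N q * phi p * cos (2 * pi * p / \<delta>)"
  using beam_int by (simp add: Ebeam cc_Re)
lemma E2: "integral\<^sup>L P (\<lambda>\<omega>. Im (beam N \<delta> m q p \<omega>)) = 1 / real N * SaN N q * phi p * sin (2 * pi * p / \<delta>)"
  using beam_int by (simp add: Ebeam cc_Im)

lemma R_eq: "Re (beam N \<delta> m q p \<omega>) - integral\<^sup>L P (\<lambda>\<omega>. Re (beam N \<delta> m q p \<omega>)) = Re (cc N \<delta> p * SS N q p \<omega>)"
  using beam_int zeq[of N \<delta> q p \<omega>] by (simp flip: minus_complex.sel)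
lemma I_eq: "Im (beam N \<delta> m q p \<omega>) - integral\<^sup>L P (\<lambda>\<omega>. Im (beam N \<delta> m q p \<omega>)) = Im (cc N \<delta> p * SS N q p \<omega>)"
  using beam_int zeq[of N \<delta> q p \<omega>] by (simp flip: minus_complex.sel)

lemma reim1: "Re w * Re w = (Re (w * cnj w) + Re (w * w)) / 2"
  by (simp del: complex_mult_cnj)
lemma reim2: "Re w * Im w = Im (w * w) / 2"
  by (simp del: complex_mult_cnj)
lemma reim3: "Im w * Re w = Im (w * w) / 2"
  by (simp del: complex_mult_cnj)
lemma reim4: "Im w * Im w = (Re (w * cnj w) - Re (w * w)) / 2"
  by (simp del: complex_mult_cnj)

lemma RR: "integral\<^sup>L P (\<lambda>\<omega>. Re (cc N \<delta> p * SS N q p \<omega>) * Re (cc N \<delta> p * SS N q p \<omega>)) = 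
   (Re (integral\<^sup>L P (\<lambda>\<omega>. (cc N \<delta> p * SS N q p \<omega>) * cnj (cc N \<delta> p * SS N q p \<omega>))) + Re (integral\<^sup>L P (\<lambda>\<omega>. (cc N \<delta> p * SS N q p \<omega>) * (cc N \<delta> p * SS N q p \<omega>)))) / 2"
proof -
  have "(\<lambda>\<omega>. Re (cc N \<delta> p * SS N q p \<omega>) * Re (cc N \<delta> p * SS N q p \<omega>)) = 
     (\<lambda>\<omega>. (Re ((cc N \<delta> p * SS N q p \<omega>) * cnj (cc N \<delta> p * SS N q p \<omega>)) + Re ((cc N \<delta> p * SS N q p \<omega>) * (cc N \<delta> p * SS N q p \<omega>))) / 2)"
    by (simp only: reim1)
  then show ?thesis using lin1[OF z_int1 z_int2] by (simp only:)
qed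

end


lemma alg1:
  fixes c s :: real assumes N: "N \<ge> 1" and cs: "c\<^sup>2 + s\<^sup>2 = 1"
  shows "((1 - (\<Phi> p)\<^sup>2) / real N + SaN N (2*q) * (\<Phi> (2*p) - (\<Phi> p)\<^sup>2) / (real N)\<^sup>2 * (c\<^sup>2 - s\<^sup>2)) / 2
     = sig_r2 \<Phi> N q p * c\<^sup>2 + sig_i2 \<Phi> N q p * s\<^sup>2"
proof -
  have "sig_r2 \<Phi> N q p * c\<^sup>2 + sig_i2 \<Phi> N q p * s\<^sup>2 = 1 / (2 * real N) * ((1 - (\<Phi> p)\<^sup>2) * (c\<^sup>2 + s\<^sup>2) + SaN N (2*q) / real N * (\<Phi> (2*p) - (\<Phi> p)\<^sup>2) * (c\<^sup>2 - s\<^sup>2))"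
    unfolding sig_r2_def sig_i2_def using N by (simp add: field_simps)
  also have "\<dots> = ((1 - (\<Phi> p)\<^sup>2) / real N + SaN N (2*q) * (\<Phi> (2*p) - (\<Phi> p)\<^sup>2) / (real N)\<^sup>2 * (c\<^sup>2 - s\<^sup>2)) / 2"
    using N cs by (simp add: field_simps power2_eq_square)
  finally show ?thesis by simp
qed

lemma alg2:
  fixes c s :: real assumes N: "N \<ge> 1" and cs: "c\<^sup>2 + s\<^sup>2 = 1"
  shows "((1 - (\<Phi> p)\<^sup>2) / real N - SaN N (2*q) * (\<Phi> (2*p) - (\<Phi> p)\<^sup>2) / (real N)\<^sup>2 * (c\<^sup>2 - s\<^sup>2)) / 2
     = sig_r2 \<Phi> N q p * s\<^sup>2 + sig_i2 \<Phi> N q p * c\<^sup>2"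
proof -
  have "sig_r2 \<Phi> N q p * s\<^sup>2 + sig_i2 \<Phi> N q p * c\<^sup>2 = 1 / (2 * real N) * ((1 - (\<Phi> p)\<^sup>2) * (c\<^sup>2 + s\<^sup>2) - SaN N (2*q) / real N * (\<Phi> (2*p) - (\<Phi> p)\<^sup>2) * (c\<^sup>2 - s\<^sup>2))"
    unfolding sig_r2_def sig_i2_def using N by (simp add: field_simps)
  also have "\<dots> = ((1 - (\<Phi> p)\<^sup>2) / real N - SaN N (2*q) * (\<Phi> (2*p) - (\<Phi> p)\<^sup>2) / (real N)\<^sup>2 * (c\<^sup>2 - s\<^sup>2)) / 2"
    using N cs by (simp add: field_simps power2_eq_square)
  finally show ?thesis by simp
qed

lemma alg3:
  fixes c s :: real assumes N: "N \<ge> 1"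
  shows "SaN N (2*q) * (\<Phi> (2*p) - (\<Phi> p)\<^sup>2) / (real N)\<^sup>2 * (2 * s * c) / 2
     = (sig_r2 \<Phi> N q p - sig_i2 \<Phi> N q p) * s * c"
  unfolding sig_r2_def sig_i2_def using N by (simp add: field_simps power2_eq_square)

context rfda begin

lemma RI: "integral\<^sup>L P (\<lambda>\<omega>. Re (cc N \<delta> p * SS N q p \<omega>) * Im (cc N \<delta> p * SS N q p \<omega>)) = 
   Im (integral\<^sup>L P (\<lambda>\<omega>. (cc N \<delta> p * SS N q p \<omega>) * (cc N \<delta> p * SS N q p \<omega>))) / 2"
  unfolding reim2 by (rule lin2[OF z_int2])
lemma IR: "integral\<^sup>L P (\<lambda>\<omega>. Im (cc N \<delta> p * SS N q p \<omega>) * Re (cc N \<delta> p * SS N q p \<omega>)) = 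
   Im (integral\<^sup>L P (\<lambda>\<omega>. (cc N \<delta> p * SS N q p \<omega>) * (cc N \<delta> p * SS N q p \<omega>))) / 2"
  unfolding reim3 by (rule lin2[OF z_int2])
lemma II: "integral\<^sup>L P (\<lambda>\<omega>. Im (cc N \<delta> p * SS N q p \<omega>) * Im (cc N \<delta> p * SS N q p \<omega>)) = 
   (Re (integral\<^sup>L P (\<lambda>\<omega>. (cc N \<delta> p * SS N q p \<omega>) * cnj (cc N \<delta> p * SS N q p \<omega>))) - Re (integral\<^sup>L P (\<lambda>\<omega>. (cc N \<delta> p * SS N q p \<omega>) * (cc N \<delta> p * SS N q p \<omega>)))) / 2"
  unfolding reim4 by (rule lin3[OF z_int1 z_int2])

lemma part2:
  assumes N: "N \<ge> 1"
  shows "let \<Phi> = (\<lambda>x. Re (Phi P m x));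
             \<alpha> = 2 * pi * p / \<delta>;
             b1 = (\<lambda>\<omega>. Re (beam N \<delta> m q p \<omega>));
             b2 = (\<lambda>\<omega>. Im (beam N \<delta> m q p \<omega>));
             E1 = integral\<^sup>L P b1;
             E2 = integral\<^sup>L P b2;
             sr = sig_r2 \<Phi> N q p;
             si = sig_i2 \<Phi> N q p
         in E1 = 1 / real N * SaN N q * \<Phi> p * cos \<alpha> \<and>
            E2 = 1 / real N * SaN N q * \<Phi> p * sin \<alpha> \<and>
            integral\<^sup>L P (\<lambda>\<omega>. (b1 \<omega> - E1) * (b1 \<omega> - E1))
               = sr * (cos \<alpha>)\<^sup>2 + si * (sin \<alpha>)\<^sup>2 \<and>
            integral\<^sup>L P (\<lambda>\<omega>. (b1 \<omega> - E1) * (b2 \<omega> - E2))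
               = (sr - si) * sin \<alpha> * cos \<alpha> \<and>
            integral\<^sup>L P (\<lambda>\<omega>. (b2 \<omega> - E2) * (b1 \<omega> - E1))
               = (sr - si) * sin \<alpha> * cos \<alpha> \<and>
            integral\<^sup>L P (\<lambda>\<omega>. (b2 \<omega> - E2) * (b2 \<omega> - E2))
               = sr * (sin \<alpha>)\<^sup>2 + si * (cos \<alpha>)\<^sup>2"
proof -
  have phi_eta: "(\<lambda>x. Re (Phi P m x)) = phi" by (simp add: phi_def fun_eq_iff)
  let ?c = "cos (2 * pi * p / \<delta>)" and ?s = "sin (2 * pi * p / \<delta>)"
  have cs: "?c\<^sup>2 + ?s\<^sup>2 = 1" by (simp add: add.commute)
  have k2r: "Re (integral\<^sup>L P (\<lambda>\<omega>. (cc N \<delta> p * SS N q p \<omega>) * (cc N \<delta> p * SS N q p \<omega>))) =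
     SaN N (2*q) * (phi (2*p) - (phi p)\<^sup>2) / (real N)\<^sup>2 * (?c\<^sup>2 - ?s\<^sup>2)"
    unfolding K2 cc2_Re ..
  have k2i: "Im (integral\<^sup>L P (\<lambda>\<omega>. (cc N \<delta> p * SS N q p \<omega>) * (cc N \<delta> p * SS N q p \<omega>))) =
     SaN N (2*q) * (phi (2*p) - (phi p)\<^sup>2) / (real N)\<^sup>2 * (2 * ?s * ?c)"
    unfolding K2 cc2_Im ..
  have k1r: "Re (integral\<^sup>L P (\<lambda>\<omega>. (cc N \<delta> p * SS N q p \<omega>) * cnj (cc N \<delta> p * SS N q p \<omega>))) = (1 - (phi p)\<^sup>2) / real N"
    unfolding K1[OF N] by simp
  show ?thesis
    unfolding Let_def phi_eta E1 [symmetric] E2[symmetric] R_eq I_eq RR RI IR II k2r k2i k1r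
    using alg1[OF N cs, of phi p q] alg2[OF N cs, of phi p q] alg3[OF N, of q phi p ?s ?c]
    by (simp add: E1 E2 mult_ac)
qed

end


lemma exp_quad: "(0::real) \<le> y \<Longrightarrow> \<bar>exp (- y) - (1 - y)\<bar> \<le> y\<^sup>2"
proof -
  assume y: "0 \<le> y"
  have lo: "1 - y \<le> exp (- y)" using exp_ge_add_one_self[of "-y"] by simp
  have "exp (- y) = 1 / exp y" by (simp add: exp_minus field_simps)
  also have "\<dots> \<le> 1 / (1 + y)" using y by (intro divide_left_mono) (auto simp: add_pos_nonneg)
  also have "\<dots> \<le> 1 - y + y\<^sup>2" using y by (simp add: field_simps power2_eq_square)
  finally show ?thesis using lo by simp
qed

context rfda begin

lemma intbound:
  fixes f :: "'a \<Rightarrow> 'b::{banach,second_countable_topology}"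
  assumes [measurable]: "f \<in> borel_measurable P" and b: "\<And>\<omega>. norm (f \<omega>) \<le> C"
  shows "norm (integral\<^sup>L P f) \<le> C"
proof -
  have "norm (integral\<^sup>L P f) \<le> integral\<^sup>L P (\<lambda>\<omega>. norm (f \<omega>))" by (rule integral_norm_bound)
  also have "\<dots> \<le> integral\<^sup>L P (\<lambda>\<omega>. C)"
    by (rule integral_mono) (auto intro!: intg[where B=C] b)
  also have "\<dots> = C" by (simp add: prob_space)
  finally show ?thesis .
qed

definition hV :: "complex \<Rightarrow> real \<Rightarrow> real \<Rightarrow> real" where
  "hV w p y = Re (w * hY p y)"

lemma hV_meas[measurable]: "hV w p \<in> borel_measurable borel"
  unfolding hV_def by measurable

lemma hV_bnd: "\<bar>hV w p y\<bar> \<le> 2 * cmod w"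
proof -
  have "\<bar>hV w p y\<bar> \<le> cmod (w * hY p y)" unfolding hV_def by (rule abs_Re_le_cmod)
  also have "\<dots> \<le> cmod w * 2" unfolding norm_mult by (intro mult_left_mono hY_bnd) auto
  finally show ?thesis by simp
qed

lemma EV: "integral\<^sup>L P (\<lambda>\<omega>. hV w p (m n \<omega>)) = 0"
proof -
  have "integrable P (\<lambda>\<omega>. hY p (m n \<omega>))" by (rule intg[where B=2]) (auto simp: hY_bnd)
  then have "integral\<^sup>L P (\<lambda>\<omega>. hV w p (m n \<omega>)) = Re (w * integral\<^sup>L P (\<lambda>\<omega>. hY p (m n \<omega>)))"
    unfolding hV_def by simp
  then show ?thesis by (simp add: EY)
qed

lemma crossV: assumes nk: "n \<noteq> k" shows "integral\<^sup>L P (\<lambda>\<omega>. hV w p (m n \<omega>) * hV w' p (m k \<omega>)) = 0"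
proof -
  have b1: "norm (hV w p y) \<le> 2 * cmod w + 2 * cmod w'" for y
    using hV_bnd[of w p y] norm_ge_zero[of w'] unfolding real_norm_def by linarith
  have b2: "norm (hV w' p y) \<le> 2 * cmod w + 2 * cmod w'" for y
    using hV_bnd[of w' p y] norm_ge_zero[of w] unfolding real_norm_def by linarith
  show ?thesis using pair_indep[of n k "hV w p" "hV w' p", OF nk hV_meas hV_meas b1 b2] by (simp add: EV)
qed

lemma V_prod_bnd: "\<bar>hV w p x * hV w' p y\<bar> \<le> (2 * cmod w) * (2 * cmod w')"
  unfolding abs_mult by (intro mult_mono hV_bnd) auto

lemma char_bound:
  fixes t :: real
  assumes wb: "cmod w \<le> K"
  shows "cmod (integral\<^sup>L P (\<lambda>\<omega>. iexp (t * hV w p (m n \<omega>)))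
           - complex_of_real (exp (- (t\<^sup>2 * integral\<^sup>L P (\<lambda>\<omega>. (hV w p (m n \<omega>))\<^sup>2) / 2))))
         \<le> \<bar>t\<bar>^3 * (2*K)^3 / 6 + (t\<^sup>2 * (2*K)\<^sup>2 / 2)\<^sup>2"
proof -
  define V where "V \<omega> = hV w p (m n \<omega>)" for \<omega>
  define s where "s = integral\<^sup>L P (\<lambda>\<omega>. (V \<omega>)\<^sup>2)"
  define y where "y = t\<^sup>2 * s / 2"
  have [measurable]: "V \<in> borel_measurable P" unfolding V_def by measurable
  have Vb: "\<bar>V \<omega>\<bar> \<le> 2 * K" for \<omega> unfolding V_def using hV_bnd[of w p "m n \<omega>"] wb by simp
  have Vb2: "(V \<omega>)\<^sup>2 \<le> (2 * K)\<^sup>2" for \<omega>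
    using Vb[of \<omega>] using power_mono[OF Vb[of \<omega>] abs_ge_zero, of 2] by simp
  have iV: "integrable P V" by (rule intg[where B="2*K"]) (use Vb in auto)
  have iV2: "integrable P (\<lambda>\<omega>. (V \<omega>)\<^sup>2)" by (rule intg[where B="(2*K)\<^sup>2"]) (use Vb2 in auto)
  have EV0: "integral\<^sup>L P V = 0" unfolding V_def by (rule EV)
  have s0: "0 \<le> s" unfolding s_def by simp
  have "norm s \<le> (2 * K)\<^sup>2" unfolding s_def by (rule intbound) (use Vb2 in auto)
  then have sb: "s \<le> (2 * K)\<^sup>2" by simp
  define A where "A \<omega> = t * V \<omega>" for \<omega>
  define B where "B \<omega> = (t * V \<omega>)\<^sup>2 / 2" for \<omega>
  have iA: "integrable P A" unfolding A_def using iV by simp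
  have iB: "integrable P B" unfolding B_def power_mult_distrib using iV2 by simp
  have EA: "integral\<^sup>L P A = 0" unfolding A_def using EV0 by simp
  have EB: "integral\<^sup>L P B = y" unfolding B_def y_def s_def power_mult_distrib by simp
  define T where "T \<omega> = 1 + \<i> * complex_of_real (A \<omega>) - complex_of_real (B \<omega>)" for \<omega>
  have iT: "integrable P T" unfolding T_def using iA iB by auto
  have Tint: "integral\<^sup>L P T = complex_of_real (1 - y)"
  proof -
    have "integral\<^sup>L P T = integral\<^sup>L P (\<lambda>\<omega>. 1 + \<i> * complex_of_real (A \<omega>)) - integral\<^sup>L P (\<lambda>\<omega>. complex_of_real (B \<omega>))"
      unfolding T_def using iA iB by (intro Bochner_Integration.integral_diff) auto
    also have "integral\<^sup>L P (\<lambda>\<omega>. 1 + \<i> * complex_of_real (A \<omega>)) = 1 + \<i> * complex_of_real (integral\<^sup>L P A)"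
      using iA by (subst Bochner_Integration.integral_add) (auto simp: prob_space)
    also have "integral\<^sup>L P (\<lambda>\<omega>. complex_of_real (B \<omega>)) = complex_of_real y"
      using EB by simp
    finally show ?thesis unfolding EA by simp
  qed
  have tm: "(\<Sum>k\<le>2. (\<i> * complex_of_real x) ^ k / fact k) = 1 + \<i> * complex_of_real x - complex_of_real (x\<^sup>2 / 2)" for x
    by (simp add: eval_nat_numeral power2_eq_square field_simps)
  have pt: "cmod (iexp (t * V \<omega>) - T \<omega>) \<le> \<bar>t\<bar>^3 * (2*K)^3 / 6" for \<omega>
  proof -
    have "cmod (iexp (t * V \<omega>) - T \<omega>) \<le> \<bar>t * V \<omega>\<bar> ^ 3 / 6"
      using iexp_approx1[of "t * V \<omega>" 2] unfolding T_def tm A_def B_def by (simp add: eval_nat_numeral)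
    also have "\<dots> \<le> \<bar>t\<bar>^3 * (2*K)^3 / 6"
    proof -
      have "\<bar>V \<omega>\<bar>^3 \<le> (2*K)^3" by (rule power_mono[OF Vb abs_ge_zero])
      then have "\<bar>t\<bar>^3 * \<bar>V \<omega>\<bar>^3 \<le> \<bar>t\<bar>^3 * (2*K)^3" by (rule mult_left_mono) simp
      then show ?thesis unfolding abs_mult power_mult_distrib by (rule divide_right_mono) simp
    qed
    finally show ?thesis .
  qed
  have iE: "integrable P (\<lambda>\<omega>. iexp (t * V \<omega>))" by (rule intg[where B=1]) auto
  have a1: "cmod (integral\<^sup>L P (\<lambda>\<omega>. iexp (t * V \<omega>)) - complex_of_real (1 - y)) \<le> \<bar>t\<bar>^3 * (2*K)^3 / 6"
  proof -
    have "integral\<^sup>L P (\<lambda>\<omega>. iexp (t * V \<omega>)) - complex_of_real (1 - y) = integral\<^sup>L P (\<lambda>\<omega>. iexp (t * V \<omega>) - T \<omega>)"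
      using iT iE Tint by simp
    also have "cmod \<dots> \<le> \<bar>t\<bar>^3 * (2*K)^3 / 6"
      by (rule intbound[OF _ pt]) (simp add: T_def A_def B_def)
    finally show ?thesis .
  qed
  have a2: "\<bar>exp (- y) - (1 - y)\<bar> \<le> (t\<^sup>2 * (2*K)\<^sup>2 / 2)\<^sup>2"
  proof -
    have y0: "0 \<le> y" unfolding y_def using s0 by simp
    have "y \<le> t\<^sup>2 * (2*K)\<^sup>2 / 2" unfolding y_def using sb by (intro divide_right_mono mult_left_mono) auto
    then have "y\<^sup>2 \<le> (t\<^sup>2 * (2*K)\<^sup>2 / 2)\<^sup>2" using y0 by (intro power_mono) auto
    then show ?thesis using exp_quad[OF y0] by simp
  qed
  have "cmod (integral\<^sup>L P (\<lambda>\<omega>. iexp (t * V \<omega>)) - complex_of_real (exp (- y)))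
     \<le> cmod (integral\<^sup>L P (\<lambda>\<omega>. iexp (t * V \<omega>)) - complex_of_real (1 - y)) + cmod (complex_of_real (1 - y) - complex_of_real (exp (- y)))"
    by (rule norm_diff_triangle_le) (rule order_refl)+
  also have "cmod (complex_of_real (1 - y) - complex_of_real (exp (- y))) = \<bar>exp (- y) - (1 - y)\<bar>"
    by (simp flip: of_real_diff)
  finally have "cmod (integral\<^sup>L P (\<lambda>\<omega>. iexp (t * V \<omega>)) - complex_of_real (exp (- y))) \<le> \<bar>t\<bar>^3 * (2*K)^3 / 6 + (t\<^sup>2 * (2*K)\<^sup>2 / 2)\<^sup>2"
    using a1 a2 by linarith
  then show ?thesis unfolding y_def s_def V_def .
qed

end


context rfda begin

lemma prod_bound:
  fixes t :: real
  assumes wb: "\<And>n. cmod (w n) \<le> K"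
  shows "cmod (integral\<^sup>L P (\<lambda>\<omega>. \<Prod>n<N. iexp (t * hV (w n) p (m n \<omega>)))
           - (\<Prod>n<N. complex_of_real (exp (- (t\<^sup>2 * integral\<^sup>L P (\<lambda>\<omega>. (hV (w n) p (m n \<omega>))\<^sup>2) / 2)))))
         \<le> real N * (\<bar>t\<bar>^3 * (2*K)^3 / 6 + (t\<^sup>2 * (2*K)\<^sup>2 / 2)\<^sup>2)"
proof -
  have "integral\<^sup>L P (\<lambda>\<omega>. \<Prod>n<N. (\<lambda>n y. iexp (t * hV (w n) p y)) n (m n \<omega>)) = (\<Prod>n<N. integral\<^sup>L P (\<lambda>\<omega>. (\<lambda>n y. iexp (t * hV (w n) p y)) n (m n \<omega>)))"
    by (rule prod_indep[where B=1]) auto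
  then have eq: "integral\<^sup>L P (\<lambda>\<omega>. \<Prod>n<N. iexp (t * hV (w n) p (m n \<omega>))) = (\<Prod>n<N. integral\<^sup>L P (\<lambda>\<omega>. iexp (t * hV (w n) p (m n \<omega>))))"
    by simp
  have "cmod ((\<Prod>n<N. integral\<^sup>L P (\<lambda>\<omega>. iexp (t * hV (w n) p (m n \<omega>))))
           - (\<Prod>n<N. complex_of_real (exp (- (t\<^sup>2 * integral\<^sup>L P (\<lambda>\<omega>. (hV (w n) p (m n \<omega>))\<^sup>2) / 2)))))
     \<le> (\<Sum>n<N. cmod (integral\<^sup>L P (\<lambda>\<omega>. iexp (t * hV (w n) p (m n \<omega>))) - complex_of_real (exp (- (t\<^sup>2 * integral\<^sup>L P (\<lambda>\<omega>. (hV (w n) p (m n \<omega>))\<^sup>2) / 2)))))"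
  proof (rule norm_prod_diff)
    fix n
    show "cmod (integral\<^sup>L P (\<lambda>\<omega>. iexp (t * hV (w n) p (m n \<omega>)))) \<le> 1"
      by (rule intbound) auto
    have "0 \<le> t\<^sup>2 * integral\<^sup>L P (\<lambda>\<omega>. (hV (w n) p (m n \<omega>))\<^sup>2) / 2" by simp
    then show "cmod (complex_of_real (exp (- (t\<^sup>2 * integral\<^sup>L P (\<lambda>\<omega>. (hV (w n) p (m n \<omega>))\<^sup>2) / 2)))) \<le> 1"
      by simp
  qed
  also have "\<dots> \<le> (\<Sum>n<N. \<bar>t\<bar>^3 * (2*K)^3 / 6 + (t\<^sup>2 * (2*K)\<^sup>2 / 2)\<^sup>2)"
    by (rule sum_mono) (rule char_bound[OF wb])
  also have "\<dots> = real N * (\<bar>t\<bar>^3 * (2*K)^3 / 6 + (t\<^sup>2 * (2*K)\<^sup>2 / 2)\<^sup>2)" by simp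
  finally show ?thesis unfolding eq .
qed

lemma int_prod_real:
  fixes F G :: "'a \<Rightarrow> real"
  assumes [measurable]: "F \<in> borel_measurable P" "G \<in> borel_measurable P"
    and "\<And>\<omega>. \<bar>F \<omega>\<bar> \<le> B" "\<And>\<omega>. \<bar>G \<omega>\<bar> \<le> B"
  shows "integrable P (\<lambda>\<omega>. F \<omega> * G \<omega>)"
proof (rule intg[where B="B * B"])
  fix \<omega> show "norm (F \<omega> * G \<omega>) \<le> B * B"
    unfolding real_norm_def abs_mult using assms(3,4)[of \<omega>] by (intro mult_mono) (auto intro: order_trans[OF abs_ge_zero])
qed measurable

end


context rfda begin

lemma iexp_sum: "iexp (\<Sum>n<(N::nat). x n) = (\<Prod>n<N. iexp (x n))"
  by (induction N) (simp_all add: exp_add distrib_left)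

lemma part3N:
  assumes N: "N \<ge> 1"
  shows "norm (let \<Phi> = (\<lambda>x. Re (Phi P m x));
                  \<alpha> = 2 * pi * p / \<delta>;
                  b1 = (\<lambda>\<omega>. Re (beam N \<delta> m q p \<omega>));
                  b2 = (\<lambda>\<omega>. Im (beam N \<delta> m q p \<omega>));
                  E1 = integral\<^sup>L P b1;
                  E2 = integral\<^sup>L P b2;
                  sr = sig_r2 \<Phi> N q p;
                  si = sig_i2 \<Phi> N q p;
                  C11 = sr * (cos \<alpha>)\<^sup>2 + si * (sin \<alpha>)\<^sup>2;
                  C12 = (sr - si) * sin \<alpha> * cos \<alpha>;
                  C22 = sr * (sin \<alpha>)\<^sup>2 + si * (cos \<alpha>)\<^sup>2
              in integral\<^sup>L P (\<lambda>\<omega>. exp (\<i> * complex_of_real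
                    (sqrt (real N) * (u1 * (b1 \<omega> - E1) + u2 * (b2 \<omega> - E2)))))
                 - complex_of_real (exp (- real N *
                    (u1\<^sup>2 * C11 + 2 * u1 * u2 * C12 + u2\<^sup>2 * C22) / 2)))
         \<le> real N * (\<bar>1 / sqrt (real N)\<bar>^3 * (2 * cmod (Complex u1 u2))^3 / 6 + ((1 / sqrt (real N))\<^sup>2 * (2 * cmod (Complex u1 u2))\<^sup>2 / 2)\<^sup>2)"
proof -
  have P2: "integral\<^sup>L P (\<lambda>\<omega>. (Re (beam N \<delta> m q p \<omega>) - integral\<^sup>L P (\<lambda>\<omega>. Re (beam N \<delta> m q p \<omega>))) * (Re (beam N \<delta> m q p \<omega>) - integral\<^sup>L P (\<lambda>\<omega>. Re (beam N \<delta> m q p \<omega>))))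
      = sig_r2 (\<lambda>x. Re (Phi P m x)) N q p * (cos (2 * pi * p / \<delta>))\<^sup>2 + sig_i2 (\<lambda>x. Re (Phi P m x)) N q p * (sin (2 * pi * p / \<delta>))\<^sup>2"
    "integral\<^sup>L P (\<lambda>\<omega>. (Re (beam N \<delta> m q p \<omega>) - integral\<^sup>L P (\<lambda>\<omega>. Re (beam N \<delta> m q p \<omega>))) * (Im (beam N \<delta> m q p \<omega>) - integral\<^sup>L P (\<lambda>\<omega>. Im (beam N \<delta> m q p \<omega>))))
      = (sig_r2 (\<lambda>x. Re (Phi P m x)) N q p - sig_i2 (\<lambda>x. Re (Phi P m x)) N q p) * sin (2 * pi * p / \<delta>) * cos (2 * pi * p / \<delta>)"
    "integral\<^sup>L P (\<lambda>\<omega>. (Im (beam N \<delta> m q p \<omega>) - integral\<^sup>L P (\<lambda>\<omega>. Im (beam N \<delta> m q p \<omega>))) * (Im (beam N \<delta> m q p \<omega>) - integral\<^sup>L P (\<lambda>\<omega>. Im (beam N \<delta> m q p \<omega>))))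
      = sig_r2 (\<lambda>x. Re (Phi P m x)) N q p * (sin (2 * pi * p / \<delta>))\<^sup>2 + sig_i2 (\<lambda>x. Re (Phi P m x)) N q p * (cos (2 * pi * p / \<delta>))\<^sup>2"
    using part2[OF N, where p=p and \<delta>=\<delta> and q=q] unfolding Let_def by blast+
  define z where "z \<omega> = cc N \<delta> p * SS N q p \<omega>" for \<omega>
  define t where "t = 1 / sqrt (real N)"
  define u where "u = Complex u1 u2"
  define w where "w n = cnj u * exp (\<i> * complex_of_real (2 * pi * p / \<delta>)) * ee N q n" for n
  define V where "V n \<omega> = hV (w n) p (m n \<omega>)" for n \<omega>
  have Npos: "0 < real N" using N by simp
  have wb: "cmod (w n) \<le> cmod u" for n unfolding w_def by (simp add: norm_mult)
  have Vb: "\<bar>hV (w n) p y\<bar> \<le> 2 * cmod u" for n y using hV_bnd[of "w n" p y] wb[of n] by linarith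
  have [measurable]: "z \<in> borel_measurable P" unfolding z_def by measurable
  have [measurable]: "V n \<in> borel_measurable P" for n unfolding V_def by measurable
  have lin: "u1 * Re (z \<omega>) + u2 * Im (z \<omega>) = 1 / real N * (\<Sum>n<N. V n \<omega>)" for \<omega>
  proof -
    have "u1 * Re (z \<omega>) + u2 * Im (z \<omega>) = Re (cnj u * z \<omega>)" unfolding u_def by simp
    also have "cnj u * z \<omega> = complex_of_real (1 / real N) * (\<Sum>n<N. w n * hY p (m n \<omega>))"
      unfolding z_def cc_def SS_def w_def by (simp add: sum_distrib_left sum_divide_distrib mult_ac)
    also have "Re \<dots> = 1 / real N * (\<Sum>n<N. V n \<omega>)"
      unfolding V_def hV_def by (simp add: Re_sum)
    finally show ?thesis .
  qed
  have f1: "iexp (sqrt (real N) * (u1 * Re (z \<omega>) + u2 * Im (z \<omega>))) = (\<Prod>n<N. iexp (t * V n \<omega>))" for \<omega>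
  proof -
    have st: "sqrt (real N) * (1 / real N) = t"
      unfolding t_def using Npos by (simp add: field_simps real_sqrt_mult[symmetric])
    have "sqrt (real N) * (u1 * Re (z \<omega>) + u2 * Im (z \<omega>)) = (\<Sum>n<N. t * V n \<omega>)"
      unfolding lin mult.assoc[symmetric] st by (rule sum_distrib_left)
    then show ?thesis by (simp only: iexp_sum)
  qed
  have bz: "\<bar>Re (z \<omega>)\<bar> \<le> norm (cc N \<delta> p) * (2 * real N)" "\<bar>Im (z \<omega>)\<bar> \<le> norm (cc N \<delta> p) * (2 * real N)" for \<omega>
    unfolding z_def using z_bnd abs_Re_le_cmod abs_Im_le_cmod order_trans by blast+
  have iRR: "integrable P (\<lambda>\<omega>. Re (z \<omega>) * Re (z \<omega>))" "integrable P (\<lambda>\<omega>. Re (z \<omega>) * Im (z \<omega>))" "integrable P (\<lambda>\<omega>. Im (z \<omega>) * Im (z \<omega>))"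
    by (rule int_prod_real[where B="norm (cc N \<delta> p) * (2 * real N)"], measurable, measurable, rule bz, rule bz)+
  have Q: "u1\<^sup>2 * integral\<^sup>L P (\<lambda>\<omega>. Re (z \<omega>) * Re (z \<omega>)) + 2 * u1 * u2 * integral\<^sup>L P (\<lambda>\<omega>. Re (z \<omega>) * Im (z \<omega>)) + u2\<^sup>2 * integral\<^sup>L P (\<lambda>\<omega>. Im (z \<omega>) * Im (z \<omega>))
      = (1 / real N)\<^sup>2 * (\<Sum>n<N. integral\<^sup>L P (\<lambda>\<omega>. (V n \<omega>)\<^sup>2))"
  proof -
    have "u1\<^sup>2 * integral\<^sup>L P (\<lambda>\<omega>. Re (z \<omega>) * Re (z \<omega>)) + 2 * u1 * u2 * integral\<^sup>L P (\<lambda>\<omega>. Re (z \<omega>) * Im (z \<omega>)) + u2\<^sup>2 * integral\<^sup>L P (\<lambda>\<omega>. Im (z \<omega>) * Im (z \<omega>))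
        = integral\<^sup>L P (\<lambda>\<omega>. u1\<^sup>2 * (Re (z \<omega>) * Re (z \<omega>)) + 2 * u1 * u2 * (Re (z \<omega>) * Im (z \<omega>)) + u2\<^sup>2 * (Im (z \<omega>) * Im (z \<omega>)))"
      using iRR by simp
    also have "\<dots> = integral\<^sup>L P (\<lambda>\<omega>. (1 / real N)\<^sup>2 * ((\<Sum>n<N. 1 * V n \<omega>) * (\<Sum>k<N. 1 * V k \<omega>)))"
    proof (rule Bochner_Integration.integral_cong[OF refl])
      fix \<omega>
      have "(1 / real N)\<^sup>2 * ((\<Sum>n<N. 1 * V n \<omega>) * (\<Sum>k<N. 1 * V k \<omega>)) = (1 / real N * (\<Sum>n<N. V n \<omega>)) * (1 / real N * (\<Sum>n<N. V n \<omega>))"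
        by (simp add: power2_eq_square)
      also have "\<dots> = (u1 * Re (z \<omega>) + u2 * Im (z \<omega>)) * (u1 * Re (z \<omega>) + u2 * Im (z \<omega>))"
        unfolding lin ..
      finally show "u1\<^sup>2 * (Re (z \<omega>) * Re (z \<omega>)) + 2 * u1 * u2 * (Re (z \<omega>) * Im (z \<omega>)) + u2\<^sup>2 * (Im (z \<omega>) * Im (z \<omega>)) = (1 / real N)\<^sup>2 * ((\<Sum>n<N. 1 * V n \<omega>) * (\<Sum>k<N. 1 * V k \<omega>))"
        by (simp add: power2_eq_square algebra_simps)
    qed
    also have "\<dots> = (1 / real N)\<^sup>2 * integral\<^sup>L P (\<lambda>\<omega>. (\<Sum>n<N. 1 * V n \<omega>) * (\<Sum>k<N. 1 * V k \<omega>))"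
      by (rule integral_mult_right_zero)
    also have "integral\<^sup>L P (\<lambda>\<omega>. (\<Sum>n<N. 1 * V n \<omega>) * (\<Sum>k<N. 1 * V k \<omega>)) = (\<Sum>n<N. 1 * 1 * integral\<^sup>L P (\<lambda>\<omega>. V n \<omega> * V n \<omega>))"
    proof (rule dsum)
      fix n k
      show "integrable P (\<lambda>\<omega>. V n \<omega> * V k \<omega>)"
        by (rule int_prod_real[where B="2 * cmod u"]) (auto simp: V_def Vb)
      show "n \<noteq> k \<Longrightarrow> integral\<^sup>L P (\<lambda>\<omega>. V n \<omega> * V k \<omega>) = 0" unfolding V_def by (rule crossV)
    qed
    finally show ?thesis by (simp add: power2_eq_square)
  qed
  have f2: "exp (- real N * ((1 / real N)\<^sup>2 * (\<Sum>n<N. integral\<^sup>L P (\<lambda>\<omega>. (V n \<omega>)\<^sup>2))) / 2)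
      = (\<Prod>n<N. exp (- (t\<^sup>2 * integral\<^sup>L P (\<lambda>\<omega>. (V n \<omega>)\<^sup>2) / 2)))"
  proof -
    have "- real N * ((1 / real N)\<^sup>2 * (\<Sum>n<N. integral\<^sup>L P (\<lambda>\<omega>. (V n \<omega>)\<^sup>2))) / 2 = (\<Sum>n<N. - (t\<^sup>2 * integral\<^sup>L P (\<lambda>\<omega>. (V n \<omega>)\<^sup>2) / 2))"
      unfolding t_def using Npos by (simp add: sum_negf[symmetric] sum_distrib_left sum_divide_distrib power2_eq_square field_simps)
    then show ?thesis by (simp add: exp_sum)
  qed
  have main: "cmod (integral\<^sup>L P (\<lambda>\<omega>. iexp (sqrt (real N) * (u1 * Re (z \<omega>) + u2 * Im (z \<omega>))))
     - complex_of_real (exp (- real N * (u1\<^sup>2 * integral\<^sup>L P (\<lambda>\<omega>. Re (z \<omega>) * Re (z \<omega>)) + 2 * u1 * u2 * integral\<^sup>L P (\<lambda>\<omega>. Re (z \<omega>) * Im (z \<omega>)) + u2\<^sup>2 * integral\<^sup>L P (\<lambda>\<omega>. Im (z \<omega>) * Im (z \<omega>))) / 2)))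
     \<le> real N * (\<bar>t\<bar>^3 * (2 * cmod u)^3 / 6 + (t\<^sup>2 * (2 * cmod u)\<^sup>2 / 2)\<^sup>2)"
    unfolding Q f1 f2 of_real_prod using prod_bound[where w=w and K="cmod u" and N=N and t=t and p=p] wb unfolding V_def by simp
  show ?thesis
    unfolding Let_def P2[symmetric] R_eq I_eq
    using main unfolding z_def t_def u_def .
qed

end


lemma alg4: "(x::real) * (a^3 * c / 6 + (a\<^sup>2 * d / 2)\<^sup>2) = c / 6 * (x * a^3) + (d / 2)\<^sup>2 * (x * (a\<^sup>2)\<^sup>2)"
  by (simp add: field_simps power2_eq_square power3_eq_cube)

lemma bound_lim:
  fixes B :: real
  shows "(\<lambda>N. real N * (\<bar>1 / sqrt (real N)\<bar>^3 * B^3 / 6 + ((1 / sqrt (real N))\<^sup>2 * B\<^sup>2 / 2)\<^sup>2)) \<longlonglongrightarrow> 0"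
proof -
  have ev: "eventually (\<lambda>N. B^3 / 6 * sqrt (1 / real N) + (B\<^sup>2 / 2)\<^sup>2 * (1 / real N) =
       real N * (\<bar>1 / sqrt (real N)\<bar>^3 * B^3 / 6 + ((1 / sqrt (real N))\<^sup>2 * B\<^sup>2 / 2)\<^sup>2)) sequentially"
    unfolding eventually_sequentially
  proof (intro exI[of _ 1] allI impI)
    fix N :: nat assume N: "1 \<le> N"
    then have Np: "0 < real N" by simp
    have s: "sqrt (real N) * sqrt (real N) = real N" using Np by simp
    have sp: "0 < sqrt (real N)" using Np by simp
    have h1: "real N * (1 / sqrt (real N))^3 = sqrt (1 / real N)"
      using sp s by (simp add: real_sqrt_divide power3_eq_cube field_simps)
    have h2: "real N * ((1 / sqrt (real N))\<^sup>2)\<^sup>2 = 1 / real N"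
      using sp s Np by (simp add: power2_eq_square field_simps)
    have ab: "\<bar>1 / sqrt (real N)\<bar> = 1 / sqrt (real N)" using sp by simp
    show "B^3 / 6 * sqrt (1 / real N) + (B\<^sup>2 / 2)\<^sup>2 * (1 / real N) =
       real N * (\<bar>1 / sqrt (real N)\<bar>^3 * B^3 / 6 + ((1 / sqrt (real N))\<^sup>2 * B\<^sup>2 / 2)\<^sup>2)"
      unfolding ab alg4 h1 h2 ..
  qed
  have "(\<lambda>N. B^3 / 6 * sqrt (1 / real N) + (B\<^sup>2 / 2)\<^sup>2 * (1 / real N)) \<longlonglongrightarrow> B^3 / 6 * sqrt 0 + (B\<^sup>2 / 2)\<^sup>2 * 0"
    by (intro tendsto_intros)
  then have "(\<lambda>N. B^3 / 6 * sqrt (1 / real N) + (B\<^sup>2 / 2)\<^sup>2 * (1 / real N)) \<longlonglongrightarrow> 0" by simp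
  then show ?thesis using ev by (rule Lim_transform_eventually)
qed

theorem theorem1:
  fixes P :: "'a measure" and m :: "nat \<Rightarrow> 'a \<Rightarrow> real" and \<delta> :: real
  assumes P: "prob_space P"
    and delta: "\<delta> > 0"
    and meas: "\<And>n. m n \<in> borel_measurable P"
    and indep: "prob_space.indep_vars P (\<lambda>_. borel) m UNIV"
    and ident: "\<And>n. distr P borel (m n) = distr P borel (m 0)"
    and symm: "distr P borel (\<lambda>\<omega>. - m 0 \<omega>) = distr P borel (m 0)"
  shows
    "(\<forall>x. Im (Phi P m x) = 0) \<and>
     (\<forall>N q p. N \<ge> 1 \<longrightarrow>
        (let \<Phi> = (\<lambda>x. Re (Phi P m x));
             \<alpha> = 2 * pi * p / \<delta>;
             b1 = (\<lambda>\<omega>. Re (beam N \<delta> m q p \<omega>));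
             b2 = (\<lambda>\<omega>. Im (beam N \<delta> m q p \<omega>));
             E1 = integral\<^sup>L P b1;
             E2 = integral\<^sup>L P b2;
             sr = sig_r2 \<Phi> N q p;
             si = sig_i2 \<Phi> N q p
         in E1 = 1 / real N * SaN N q * \<Phi> p * cos \<alpha> \<and>
            E2 = 1 / real N * SaN N q * \<Phi> p * sin \<alpha> \<and>
            integral\<^sup>L P (\<lambda>\<omega>. (b1 \<omega> - E1) * (b1 \<omega> - E1))
               = sr * (cos \<alpha>)\<^sup>2 + si * (sin \<alpha>)\<^sup>2 \<and>
            integral\<^sup>L P (\<lambda>\<omega>. (b1 \<omega> - E1) * (b2 \<omega> - E2))
               = (sr - si) * sin \<alpha> * cos \<alpha> \<and>
            integral\<^sup>L P (\<lambda>\<omega>. (b2 \<omega> - E2) * (b1 \<omega> - E1))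
               = (sr - si) * sin \<alpha> * cos \<alpha> \<and>
            integral\<^sup>L P (\<lambda>\<omega>. (b2 \<omega> - E2) * (b2 \<omega> - E2))
               = sr * (sin \<alpha>)\<^sup>2 + si * (cos \<alpha>)\<^sup>2)) \<and>
     (\<forall>q p u1 u2.
        ((\<lambda>N. let \<Phi> = (\<lambda>x. Re (Phi P m x));
                  \<alpha> = 2 * pi * p / \<delta>;
                  b1 = (\<lambda>\<omega>. Re (beam N \<delta> m q p \<omega>));
                  b2 = (\<lambda>\<omega>. Im (beam N \<delta> m q p \<omega>));
                  E1 = integral\<^sup>L P b1;
                  E2 = integral\<^sup>L P b2;
                  sr = sig_r2 \<Phi> N q p;
                  si = sig_i2 \<Phi> N q p;
                  C11 = sr * (cos \<alpha>)\<^sup>2 + si * (sin \<alpha>)\<^sup>2;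
                  C12 = (sr - si) * sin \<alpha> * cos \<alpha>;
                  C22 = sr * (sin \<alpha>)\<^sup>2 + si * (cos \<alpha>)\<^sup>2
              in integral\<^sup>L P (\<lambda>\<omega>. exp (\<i> * complex_of_real
                    (sqrt (real N) * (u1 * (b1 \<omega> - E1) + u2 * (b2 \<omega> - E2)))))
                 - complex_of_real (exp (- real N *
                    (u1\<^sup>2 * C11 + 2 * u1 * u2 * C12 + u2\<^sup>2 * C22) / 2)))
         \<longlongrightarrow> 0) sequentially)"
proof -
  interpret rfda P m
    by (rule rfda.intro[OF P], unfold_locales) (use meas indep ident symm in auto)
  show ?thesis
  proof (intro conjI allI impI)
    fix x show "Im (Phi P m x) = 0" by (rule Phi_real)
  next
    fix N :: nat and q p :: real assume N: "N \<ge> 1"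
    show "let \<Phi> = (\<lambda>x. Re (Phi P m x));
             \<alpha> = 2 * pi * p / \<delta>;
             b1 = (\<lambda>\<omega>. Re (beam N \<delta> m q p \<omega>));
             b2 = (\<lambda>\<omega>. Im (beam N \<delta> m q p \<omega>));
             E1 = integral\<^sup>L P b1;
             E2 = integral\<^sup>L P b2;
             sr = sig_r2 \<Phi> N q p;
             si = sig_i2 \<Phi> N q p
         in E1 = 1 / real N * SaN N q * \<Phi> p * cos \<alpha> \<and>
            E2 = 1 / real N * SaN N q * \<Phi> p * sin \<alpha> \<and>
            integral\<^sup>L P (\<lambda>\<omega>. (b1 \<omega> - E1) * (b1 \<omega> - E1))
               = sr * (cos \<alpha>)\<^sup>2 + si * (sin \<alpha>)\<^sup>2 \<and>
            integral\<^sup>L P (\<lambda>\<omega>. (b1 \<omega> - E1) * (b2 \<omega> - E2))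
               = (sr - si) * sin \<alpha> * cos \<alpha> \<and>
            integral\<^sup>L P (\<lambda>\<omega>. (b2 \<omega> - E2) * (b1 \<omega> - E1))
               = (sr - si) * sin \<alpha> * cos \<alpha> \<and>
            integral\<^sup>L P (\<lambda>\<omega>. (b2 \<omega> - E2) * (b2 \<omega> - E2))
               = sr * (sin \<alpha>)\<^sup>2 + si * (cos \<alpha>)\<^sup>2"
      by (rule part2[OF N])
  next
    fix q p u1 u2 :: real
    show "((\<lambda>N. let \<Phi> = (\<lambda>x. Re (Phi P m x));
                  \<alpha> = 2 * pi * p / \<delta>;
                  b1 = (\<lambda>\<omega>. Re (beam N \<delta> m q p \<omega>));
                  b2 = (\<lambda>\<omega>. Im (beam N \<delta> m q p \<omega>));
                  E1 = integral\<^sup>L P b1;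
                  E2 = integral\<^sup>L P b2;
                  sr = sig_r2 \<Phi> N q p;
                  si = sig_i2 \<Phi> N q p;
                  C11 = sr * (cos \<alpha>)\<^sup>2 + si * (sin \<alpha>)\<^sup>2;
                  C12 = (sr - si) * sin \<alpha> * cos \<alpha>;
                  C22 = sr * (sin \<alpha>)\<^sup>2 + si * (cos \<alpha>)\<^sup>2
              in integral\<^sup>L P (\<lambda>\<omega>. exp (\<i> * complex_of_real
                    (sqrt (real N) * (u1 * (b1 \<omega> - E1) + u2 * (b2 \<omega> - E2)))))
                 - complex_of_real (exp (- real N *
                    (u1\<^sup>2 * C11 + 2 * u1 * u2 * C12 + u2\<^sup>2 * C22) / 2)))
         \<longlongrightarrow> 0) sequentially"
    proof (rule Lim_null_comparison[OF _ bound_lim[of "2 * cmod (Complex u1 u2)"]])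
      show "eventually (\<lambda>N. norm (let \<Phi> = (\<lambda>x. Re (Phi P m x));
                  \<alpha> = 2 * pi * p / \<delta>;
                  b1 = (\<lambda>\<omega>. Re (beam N \<delta> m q p \<omega>));
                  b2 = (\<lambda>\<omega>. Im (beam N \<delta> m q p \<omega>));
                  E1 = integral\<^sup>L P b1;
                  E2 = integral\<^sup>L P b2;
                  sr = sig_r2 \<Phi> N q p;
                  si = sig_i2 \<Phi> N q p;
                  C11 = sr * (cos \<alpha>)\<^sup>2 + si * (sin \<alpha>)\<^sup>2;
                  C12 = (sr - si) * sin \<alpha> * cos \<alpha>;
                  C22 = sr * (sin \<alpha>)\<^sup>2 + si * (cos \<alpha>)\<^sup>2
              in integral\<^sup>L P (\<lambda>\<omega>. exp (\<i> * complex_of_real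
                    (sqrt (real N) * (u1 * (b1 \<omega> - E1) + u2 * (b2 \<omega> - E2)))))
                 - complex_of_real (exp (- real N *
                    (u1\<^sup>2 * C11 + 2 * u1 * u2 * C12 + u2\<^sup>2 * C22) / 2)))
         \<le> real N * (\<bar>1 / sqrt (real N)\<bar>^3 * (2 * cmod (Complex u1 u2))^3 / 6 + ((1 / sqrt (real N))\<^sup>2 * (2 * cmod (Complex u1 u2))\<^sup>2 / 2)\<^sup>2)) sequentially"
        unfolding eventually_sequentially
        by (intro exI[of _ 1] allI impI part3N)
    qed
  qed
qed


end
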